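(* Let $m,n$ be positive integers, and let $k,s$ be positive integers with $k<n$ and $s<m+n-k-1$. Then $$\sum_{t=s+1}^{m+n-k-1}(t-n+k+1)(t+2)(t+3)\cdots(t+k)\binom{\frac{mn}{n-k}+n-k-t-2}{\frac{mk}{n-k}-1} =\frac{m}{m+n-k}(s+2)(s+3)\cdots(s+k+1)\binom{\frac{mn}{n-k}+n-k-s-2}{\frac{mk}{n-k}}.$$
   Context: Binomial coefficients are generalized binomial coefficients: for real $a,b$, $\binom{a}{b}=\frac{\Gamma(a+1)}{\Gamma(b+1)\Gamma(a-b+1)}$, where $\Gamma$ is the Gamma function; in particular, if $b$ is a positive integer then $\binom{a}{b}=\frac{a(a-1)\cdots(a-b+1)}{b!}$. The product $(t+2)(t+3)\cdots(t+k)$ is the product of $t+j$ over $j=2,\ldots,k$ (empty product equal to $1$ when $k=1$). *)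

theory Defs
  imports "HOL-Analysis.Analysis"
begin

definition gbinom :: "real \<Rightarrow> real \<Rightarrow> real" where
  "gbinom a b = Gamma (a + 1) / (Gamma (b + 1) * Gamma (a - b + 1))"

end

theory Submission
  imports Defs
begin

lemma gpos: "(x::real) > 0 \<Longrightarrow> x \<notin> \<int>\<^sub>\<le>\<^sub>0"
  by (auto elim!: nonpos_Ints_cases)

theorem lemma2p4:
  fixes m n k s :: nat
  assumes "0 < m" "0 < n" "0 < k" "0 < s" "k < n" "s < m + n - k - 1"
  shows "(\<Sum>t = s + 1..m + n - k - 1.
            (real t - real n + real k + 1) * (\<Prod>j = 2..k. real t + real j) *
            gbinom (real m * real n / (real n - real k) + real n - real k - real t - 2)
                   (real m * real k / (real n - real k) - 1))
         = real m / (real m + real n - real k) * (\<Prod>j = 2..k + 1. real s + real j) *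
            gbinom (real m * real n / (real n - real k) + real n - real k - real s - 2)
                   (real m * real k / (real n - real k))"
proof -
  define L where "L = m + n - k - 1"
  define D where "D = real n - real k"
  define b where "b = real m * real k / D"
  have D: "D > 0" using assms unfolding D_def by simp
  have b: "b > 0" using assms D unfolding b_def by simp
  have a: "real m * real n / D = b + real m" unfolding b_def using D
    by (simp add: field_simps D_def)
  have LD: "real L = real m + D - 1" using assms unfolding L_def D_def by simp
  define f where "f t = (real t - real n + real k + 1) * (\<Prod>j = 2..k. real t + real j) *
            gbinom (real m * real n / (real n - real k) + real n - real k - real t - 2)
                   (real m * real k / (real n - real k) - 1)" for t :: nat
  define F where "F s = real m / (real m + real n - real k) * (\<Prod>j = 2..k + 1. real s + real j) *
            gbinom (real m * real n / (real n - real k) + real n - real k - real s - 2)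
                   (real m * real k / (real n - real k))" for s :: nat
  have main: "(\<Sum>t = s + 1..L. f t) = F s" if "s \<le> L" for s
    using that
  proof (induction s rule: inc_induct)
    case base
    have "F L = 0" unfolding F_def gbinom_def a[unfolded D_def] b_def[unfolded D_def, symmetric] 
      using LD unfolding D_def by simp
    then show ?case by simp
  next
    case (step s)
    have "(\<Sum>t = s + 1..L. f t) = f (s+1) + (\<Sum>t = Suc s + 1..L. f t)"
      using step(2) by (subst sum.atLeast_Suc_atMost) auto
    also have "\<dots> = f (s+1) + F (Suc s)" using step(3) by simp
    also have "\<dots> = F s"
    proof -
      define Q where "Q = (\<Prod>j = 3..k+1. real s + real j)"
      have P1: "(\<Prod>j = 2..k + 1. real s + real j) = (real s + 2) * Q"
        unfolding Q_def using assms by (subst prod.atLeast_Suc_atMost) (auto simp: numeral_3_eq_3)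
      have P2: "(\<Prod>j = 2..k. real (s+1) + real j) = Q"
      proof -
        have "Q = (\<Prod>j = Suc 2..Suc k. real s + real j)" unfolding Q_def by simp
        also have "\<dots> = (\<Prod>j = 2..k. real s + real (Suc j))"
          by (rule prod.shift_bounds_cl_Suc_ivl)
        finally show ?thesis by (simp add: add_ac)
      qed
      have P3: "(\<Prod>j = 2..k+1. real (Suc s) + real j) = Q * (real s + real k + 2)"
        using P2 assms(3) by (simp add: add.commute)
      define r where "r = real L - real s - 1"
      have r: "r \<ge> 0" using step(2) unfolding r_def by simp
      define g where "g = Gamma (b + r)"
      have g1: "Gamma (b + r + 1) = (b + r) * g" unfolding g_def using b r
        by (intro Gamma_plus1 gpos) simp
      have g2: "Gamma (b + 1) = b * Gamma b" using b by (intro Gamma_plus1 gpos) simp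
      have g3: "Gamma (r + 2) = (r + 1) * Gamma (r + 1)" using r
        using Gamma_plus1[OF gpos, of "r+1"] by (simp add: add.assoc)
      have gb: "Gamma b > 0" using b by simp
      have gr: "Gamma (r+1) > 0" using r by simp
      have X1: "real m * real n / (real n - real k) + real n - real k - real (s+1) - 2 = b + r - 1"
        using a LD unfolding r_def D_def by simp
      have X0: "real m * real n / (real n - real k) + real n - real k - real s - 2 = b + r"
        using a LD unfolding r_def D_def by simp
      have X2: "real m * real n / (real n - real k) + real n - real k - real (Suc s) - 2 = b + r - 1"
        using a LD unfolding r_def D_def by simp
      have B: "real m * real k / (real n - real k) = b" unfolding b_def D_def ..
      have e1: "f (s+1) = (real s + 2 - D) * Q * (g / (Gamma b * Gamma (r+1)))"
        unfolding f_def gbinom_def X1 B P2 g_def D_def by (simp add: algebra_simps)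
      have e2: "F s = real m / (real m + D) * ((real s + 2) * Q) * ((b+r)*g / (b * Gamma b * Gamma (r+1)))"
        unfolding F_def gbinom_def X0 B P1 g_def D_def g1[unfolded g_def] g2 by (simp add: algebra_simps)
      have e3: "F (Suc s) = real m / (real m + D) * (Q * (real s + real k + 2)) * (g / (b * Gamma b * Gamma r))"
        unfolding F_def gbinom_def X2 B P3 g_def D_def g2 by (simp add: algebra_simps)
      have rr: "r = real m + D - 2 - real s" unfolding r_def LD by simp
      have bD: "b * D = real m * real k" unfolding b_def using D by simp
      have mD: "real m + D > 0" using D by simp
      show ?thesis
      proof (cases "r = 0")
        case True
        have "F (Suc s) = 0" unfolding e3 True by simp
        moreover have "real s + 2 = real m + D" using rr True by simp
        moreover have "Gamma b \<noteq> 0" "D + real m \<noteq> 0" "D * Gamma b + Gamma b * real m \<noteq> 0"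
          using gb mD D by (auto, smt (verit) mult_pos_pos mult_nonneg_nonneg of_nat_0_le_iff)
        ultimately show ?thesis unfolding e1 e2 True using b
          by (simp add: field_simps)
      next
        case False
        then have r0: "r > 0" using r by simp
        have g4: "Gamma (r + 1) = r * Gamma r" using r0 by (intro Gamma_plus1 gpos) simp
        have gr': "Gamma r > 0" using r0 by simp
        have key: "(real s + 2 - D) * b * (real m + D) + real m * (real s + real k + 2) * r = real m * (real s + 2) * (b + r)"
          unfolding rr b_def using D by (simp add: field_simps)
        define E where "E = real m + D"
        define K where "K = Q * g / (Gamma b * Gamma r * r * b * E)"
        have nz: "Gamma b \<noteq> 0" "Gamma r \<noteq> 0" "r \<noteq> 0" "b \<noteq> 0" "E \<noteq> 0"
          using gb gr' r0 b mD[folded E_def] by (metis less_imp_neq)+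
        have f1: "f (s+1) = K * ((real s + 2 - D) * b * E)"
          unfolding e1 g4 K_def using nz by (simp add: field_simps)
        have f2: "F s = K * (real m * (real s + 2) * (b + r))"
          unfolding e2 g4 K_def E_def[symmetric] using nz by (simp add: field_simps)
        have f3: "F (Suc s) = K * (real m * (real s + real k + 2) * r)"
          unfolding e3 K_def E_def[symmetric] using nz by (simp add: field_simps)
        show ?thesis unfolding f1 f2 f3 key[symmetric] E_def by (simp add: algebra_simps)
      qed
    qed
    finally show ?case .
  qed
  show ?thesis using main[of s] assms unfolding f_def F_def L_def by simp
qed

end
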